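(* For $n\ge2$ and $u_1,\dots,u_n\in\mathcal B$, $\langle X(u_1)\cdots X(u_n)\Omega,\Omega\rangle_{\gamma,\phi}=\sum_{\pi\in\mathrm{NC}_{ns}(n)}\langle W_M(\pi)\Omega,\Omega\rangle_{\gamma,\phi}$, and for $n=1$, $\langle X(u_1)\Omega,\Omega\rangle_{\gamma,\phi}=0$.
   Context: Let $\mathcal B$ be a unital $*$-algebra with star-linear maps $\phi:\mathcal B\to\mathbb C$, $\gamma:\mathcal B\to\mathcal B$, $\Lambda:\mathcal B\otimes_{alg}\mathcal B\to\mathcal B$, where $\phi$ is positive and faithful and $\gamma+\phi$ is completely positive, with $(\gamma+\phi)[b]:=\gamma[b]+\phi[b]1_{\mathcal B}$. Assume $\phi[v^*\Lambda(b\otimes u)]=\phi[\Lambda(b^*\otimes v)^*u]$ and $\gamma[v^*\Lambda(b\otimes u)]=\gamma[\Lambda(b^*\otimes v)^*u]$ for all $b,u,v$. On $\mathcal F_{alg}(\mathcal B)=\mathbb C\Omega\oplus\bigoplus_{n\ge1}\mathcal B^{\otimes n}$ use the form $\langle\Omega,\Omega\rangle_{\gamma,\phi}=1$, $\langle u_1\otimes\cdots\otimes u_n,v_1\otimes\cdots\otimes v_k\rangle_{\gamma,\phi}=\delta_{n=k}\phi[v_n^*(\gamma+\phi)[v_{n-1}^*\cdots(\gamma+\phi)[v_1^*u_1]\cdots u_{n-1}]u_n]$. For $b\in\mathcal B$ define operators on $\mathcal F_{alg}(\mathcal B)$: $a^+(b)\Omega=b$, $a^+(b)(u_1\otimes\cdots\otimes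 u_n)=b\otimes u_1\otimes\cdots\otimes u_n$; $a^-(b)\Omega=0$, $a^-(b)u_1=\phi[bu_1]\Omega$, $a^-(b)(u_1\otimes\cdots\otimes u_n)=(\gamma+\phi)[bu_1]u_2\otimes\cdots\otimes u_n$ for $n\ge2$; $a^0(b)\Omega=0$, $a^0(b)(u_1\otimes\cdots\otimes u_n)=\Lambda(b\otimes u_1)\otimes u_2\otimes\cdots\otimes u_n$; and $X(b)=a^+(b)+a^-(b)+a^0(b)$. $\mathrm{NC}(n)$ is the set of noncrossing partitions of $\{1,\dots,n\}$; $\mathrm{NC}_{ns}(n)$ those with no singleton blocks. In a block, the smallest element is opening, the largest closing, others middle. For $\pi\in\mathrm{NC}_{ns}(n)$, $W_M(\pi)=a_1(u_1)a_2(u_2)\cdots a_n(u_n)$ where $a_i=a^-$ if $i$ is opening, $a^+$ if $i$ is closing, $a^0$ if $i$ is middle. *)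

theory Defs
  imports Complex_Main "HOL-Library.Disjoint_Sets"
begin

definition star_alg :: "(complex \<Rightarrow> 'b::ring_1 \<Rightarrow> 'b) \<Rightarrow> ('b \<Rightarrow> 'b) \<Rightarrow> bool" where
  "star_alg sc st \<longleftrightarrow>
    (\<forall>a b x y. sc a (x + y) = sc a x + sc a y \<and> sc (a + b) x = sc a x + sc b x
       \<and> sc (a * b) x = sc a (sc b x) \<and> sc 1 x = x
       \<and> sc a (x * y) = sc a x * y \<and> sc a (x * y) = x * sc a y
       \<and> st (st x) = x \<and> st (x + y) = st x + st y
       \<and> st (sc a x) = sc (cnj a) (st x) \<and> st (x * y) = st y * st x)"

definition star_linear_functional ::
  "(complex \<Rightarrow> 'b::ring_1 \<Rightarrow> 'b) \<Rightarrow> ('b \<Rightarrow> 'b) \<Rightarrow> ('b \<Rightarrow> complex) \<Rightarrow> bool" where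
  "star_linear_functional sc st f \<longleftrightarrow>
    (\<forall>a x y. f (x + y) = f x + f y \<and> f (sc a x) = a * f x \<and> f (st x) = cnj (f x))"

definition star_linear_map ::
  "(complex \<Rightarrow> 'b::ring_1 \<Rightarrow> 'b) \<Rightarrow> ('b \<Rightarrow> 'b) \<Rightarrow> ('b \<Rightarrow> 'b) \<Rightarrow> bool" where
  "star_linear_map sc st g \<longleftrightarrow>
    (\<forall>a x y. g (x + y) = g x + g y \<and> g (sc a x) = sc a (g x) \<and> g (st x) = st (g x))"

text \<open>A linear map on the algebraic tensor product B \<otimes> B is the same as a bilinear map
B \<times> B \<rightarrow> B; the star on B \<otimes> B is (b \<otimes> u)* = b* \<otimes> u*.\<close>

definition star_bilinear_map ::
  "(complex \<Rightarrow> 'b::ring_1 \<Rightarrow> 'b) \<Rightarrow> ('b \<Rightarrow> 'b) \<Rightarrow> ('b \<Rightarrow> 'b \<Rightarrow> 'b) \<Rightarrow> bool" where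
  "star_bilinear_map sc st L \<longleftrightarrow>
    (\<forall>a x y z. L (x + y) z = L x z + L y z \<and> L z (x + y) = L z x + L z y
       \<and> L (sc a x) y = sc a (L x y) \<and> L x (sc a y) = sc a (L x y)
       \<and> L (st x) (st y) = st (L x y))"

definition positive_functional :: "('b::ring_1 \<Rightarrow> 'b) \<Rightarrow> ('b \<Rightarrow> complex) \<Rightarrow> bool" where
  "positive_functional st f \<longleftrightarrow> (\<forall>b. f (st b * b) \<in> \<real> \<and> 0 \<le> Re (f (st b * b)))"

definition faithful_functional :: "('b::ring_1 \<Rightarrow> 'b) \<Rightarrow> ('b \<Rightarrow> complex) \<Rightarrow> bool" where
  "faithful_functional st f \<longleftrightarrow> (\<forall>b. f (st b * b) = 0 \<longrightarrow> b = 0)"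

definition positive_elem :: "('b::ring_1 \<Rightarrow> 'b) \<Rightarrow> 'b \<Rightarrow> bool" where
  "positive_elem st x \<longleftrightarrow> (\<exists>cs :: 'b list. x = sum_list (map (\<lambda>c. st c * c) cs))"

definition completely_positive :: "('b::ring_1 \<Rightarrow> 'b) \<Rightarrow> ('b \<Rightarrow> 'b) \<Rightarrow> bool" where
  "completely_positive st T \<longleftrightarrow>
    (\<forall>as bs :: 'b list. length as = length bs \<longrightarrow>
       positive_elem st (\<Sum>i<length as. \<Sum>j<length as.
          st (bs ! i) * T (st (as ! i) * as ! j) * bs ! j))"

text \<open>(\<gamma>+\<phi>)[b] = \<gamma>[b] + \<phi>[b] 1.\<close>

definition gp :: "(complex \<Rightarrow> 'b::ring_1 \<Rightarrow> 'b) \<Rightarrow> ('b \<Rightarrow> complex) \<Rightarrow> ('b \<Rightarrow> 'b) \<Rightarrow> 'b \<Rightarrow> 'b" where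
  "gp sc phi gam b = gam b + sc (phi b) 1"

text \<open>A simple tensor u_1 \<otimes> ... \<otimes> u_n is represented by the list [u_1,...,u_n];
the empty list is the vacuum \<Omega>. A vector of the algebraic Fock space is represented
as a formal finite linear combination of simple tensors, i.e. a list of
(coefficient, word) pairs. All operators and the form below are multilinear in the
tensor entries, hence compatible with the algebraic tensor product.\<close>

type_synonym 'b fvec = "(complex \<times> 'b list) list"

definition vac :: "'b fvec" where "vac = [(1, [])]"

fun ip_aux :: "(complex \<Rightarrow> 'b::ring_1 \<Rightarrow> 'b) \<Rightarrow> ('b \<Rightarrow> 'b) \<Rightarrow> ('b \<Rightarrow> complex) \<Rightarrow> ('b \<Rightarrow> 'b)
    \<Rightarrow> 'b \<Rightarrow> ('b \<times> 'b) list \<Rightarrow> 'b" where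
  "ip_aux sc st phi gam r [] = r"
| "ip_aux sc st phi gam r ((u, v) # ps) = ip_aux sc st phi gam (st v * gp sc phi gam r * u) ps"

text \<open>\<langle>u_1\<otimes>...\<otimes>u_n, v_1\<otimes>...\<otimes>v_k\<rangle> =
  \<delta>_{n=k} \<phi>[v_n* (\<gamma>+\<phi>)[v_{n-1}* ... (\<gamma>+\<phi>)[v_1* u_1] ... u_{n-1}] u_n].\<close>

fun word_inner :: "(complex \<Rightarrow> 'b::ring_1 \<Rightarrow> 'b) \<Rightarrow> ('b \<Rightarrow> 'b) \<Rightarrow> ('b \<Rightarrow> complex) \<Rightarrow> ('b \<Rightarrow> 'b)
    \<Rightarrow> 'b list \<Rightarrow> 'b list \<Rightarrow> complex" where
  "word_inner sc st phi gam [] [] = 1"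
| "word_inner sc st phi gam (u # us) (v # vs) =
     (if length us = length vs then phi (ip_aux sc st phi gam (st v * u) (zip us vs)) else 0)"
| "word_inner sc st phi gam _ _ = 0"

definition fock_inner :: "(complex \<Rightarrow> 'b::ring_1 \<Rightarrow> 'b) \<Rightarrow> ('b \<Rightarrow> 'b) \<Rightarrow> ('b \<Rightarrow> complex) \<Rightarrow> ('b \<Rightarrow> 'b)
    \<Rightarrow> 'b fvec \<Rightarrow> 'b fvec \<Rightarrow> complex" where
  "fock_inner sc st phi gam xs ys =
     (\<Sum>p\<leftarrow>xs. \<Sum>q\<leftarrow>ys. fst p * cnj (fst q) * word_inner sc st phi gam (snd p) (snd q))"

definition lin_ext :: "('b list \<Rightarrow> 'b fvec) \<Rightarrow> 'b fvec \<Rightarrow> 'b fvec" where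
  "lin_ext f xs = concat (map (\<lambda>p. map (\<lambda>q. (fst p * fst q, snd q)) (f (snd p))) xs)"

fun cre_w :: "'b \<Rightarrow> 'b list \<Rightarrow> 'b fvec" where
  "cre_w b w = [(1, b # w)]"

fun ann_w :: "(complex \<Rightarrow> 'b::ring_1 \<Rightarrow> 'b) \<Rightarrow> ('b \<Rightarrow> 'b) \<Rightarrow> ('b \<Rightarrow> complex) \<Rightarrow> ('b \<Rightarrow> 'b)
    \<Rightarrow> 'b \<Rightarrow> 'b list \<Rightarrow> 'b fvec" where
  "ann_w sc st phi gam b [] = []"
| "ann_w sc st phi gam b [u] = [(phi (b * u), [])]"
| "ann_w sc st phi gam b (u1 # u2 # us) = [(1, (gp sc phi gam (b * u1) * u2) # us)]"

fun pres_w :: "('b \<Rightarrow> 'b \<Rightarrow> 'b) \<Rightarrow> 'b \<Rightarrow> 'b list \<Rightarrow> 'b fvec" where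
  "pres_w Lam b [] = []"
| "pres_w Lam b (u # us) = [(1, Lam b u # us)]"

definition cre :: "'b \<Rightarrow> 'b fvec \<Rightarrow> 'b fvec" where
  "cre b = lin_ext (cre_w b)"

definition ann :: "(complex \<Rightarrow> 'b::ring_1 \<Rightarrow> 'b) \<Rightarrow> ('b \<Rightarrow> 'b) \<Rightarrow> ('b \<Rightarrow> complex) \<Rightarrow> ('b \<Rightarrow> 'b)
    \<Rightarrow> 'b \<Rightarrow> 'b fvec \<Rightarrow> 'b fvec" where
  "ann sc st phi gam b = lin_ext (ann_w sc st phi gam b)"

definition pres :: "('b \<Rightarrow> 'b \<Rightarrow> 'b) \<Rightarrow> 'b \<Rightarrow> 'b fvec \<Rightarrow> 'b fvec" where
  "pres Lam b = lin_ext (pres_w Lam b)"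

definition Xop :: "(complex \<Rightarrow> 'b::ring_1 \<Rightarrow> 'b) \<Rightarrow> ('b \<Rightarrow> 'b) \<Rightarrow> ('b \<Rightarrow> complex) \<Rightarrow> ('b \<Rightarrow> 'b)
    \<Rightarrow> ('b \<Rightarrow> 'b \<Rightarrow> 'b) \<Rightarrow> 'b \<Rightarrow> 'b fvec \<Rightarrow> 'b fvec" where
  "Xop sc st phi gam Lam b xs = cre b xs @ ann sc st phi gam b xs @ pres Lam b xs"

text \<open>Product of operators A_1 A_2 ... A_n applied to a vector (A_n acts first).\<close>

definition op_prod :: "('b fvec \<Rightarrow> 'b fvec) list \<Rightarrow> 'b fvec \<Rightarrow> 'b fvec" where
  "op_prod ops v = foldr (\<lambda>A w. A w) ops v"

definition noncrossing :: "nat set set \<Rightarrow> bool" where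
  "noncrossing P \<longleftrightarrow> (\<forall>B1\<in>P. \<forall>B2\<in>P. \<forall>a b c d. B1 \<noteq> B2 \<and> a < b \<and> b < c \<and> c < d
       \<and> a \<in> B1 \<and> c \<in> B1 \<and> b \<in> B2 \<and> d \<in> B2 \<longrightarrow> False)"

definition NC :: "nat \<Rightarrow> nat set set set" where
  "NC n = {P. partition_on {1..n} P \<and> noncrossing P}"

definition NC_ns :: "nat \<Rightarrow> nat set set set" where
  "NC_ns n = {P \<in> NC n. \<forall>B\<in>P. \<not> (\<exists>x. B = {x})}"

definition block_of :: "nat set set \<Rightarrow> nat \<Rightarrow> nat set" where
  "block_of P i = (THE B. B \<in> P \<and> i \<in> B)"

definition is_opening :: "nat set set \<Rightarrow> nat \<Rightarrow> bool" where
  "is_opening P i \<longleftrightarrow> i = Min (block_of P i)"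

definition is_closing :: "nat set set \<Rightarrow> nat \<Rightarrow> bool" where
  "is_closing P i \<longleftrightarrow> i = Max (block_of P i)"

definition WM_op :: "(complex \<Rightarrow> 'b::ring_1 \<Rightarrow> 'b) \<Rightarrow> ('b \<Rightarrow> 'b) \<Rightarrow> ('b \<Rightarrow> complex) \<Rightarrow> ('b \<Rightarrow> 'b)
    \<Rightarrow> ('b \<Rightarrow> 'b \<Rightarrow> 'b) \<Rightarrow> nat set set \<Rightarrow> nat \<Rightarrow> 'b \<Rightarrow> 'b fvec \<Rightarrow> 'b fvec" where
  "WM_op sc st phi gam Lam P i b =
     (if is_opening P i then ann sc st phi gam b
      else if is_closing P i then cre b else pres Lam b)"

definition WM :: "(complex \<Rightarrow> 'b::ring_1 \<Rightarrow> 'b) \<Rightarrow> ('b \<Rightarrow> 'b) \<Rightarrow> ('b \<Rightarrow> complex) \<Rightarrow> ('b \<Rightarrow> 'b)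
    \<Rightarrow> ('b \<Rightarrow> 'b \<Rightarrow> 'b) \<Rightarrow> nat \<Rightarrow> nat set set \<Rightarrow> (nat \<Rightarrow> 'b) \<Rightarrow> 'b fvec \<Rightarrow> 'b fvec" where
  "WM sc st phi gam Lam n P u = op_prod (map (\<lambda>i. WM_op sc st phi gam Lam P i (u i)) [1..<Suc n])"

end

theory Submission
  imports Defs
begin


datatype ty = TC | TA | TP

definition tyof :: "nat set set \<Rightarrow> nat \<Rightarrow> ty" where
  "tyof P i = (if is_opening P i then TA else if is_closing P i then TC else TP)"

definition ncns :: "nat set \<Rightarrow> nat set set \<Rightarrow> bool" where
  "ncns S P \<longleftrightarrow> partition_on S P \<and> noncrossing P \<and> (\<forall>B\<in>P. \<not> (\<exists>x. B = {x}))"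

lemma NC_ns_iff: "P \<in> NC_ns n \<longleftrightarrow> ncns {1..n} P"
  by (simp add: NC_ns_def NC_def ncns_def)

lemma block_of_eq: "partition_on S P \<Longrightarrow> B \<in> P \<Longrightarrow> i \<in> B \<Longrightarrow> block_of P i = B"
  unfolding block_of_def
  by (rule the_equality) (auto simp: partition_on_def disjoint_def)

lemma tyof_in: "partition_on S P \<Longrightarrow> B \<in> P \<Longrightarrow> i \<in> B \<Longrightarrow>
   tyof P i = (if i = Min B then TA else if i = Max B then TC else TP)"
  by (simp add: tyof_def is_opening_def is_closing_def block_of_eq)

lemma part_block: assumes "partition_on S P" "i \<in> S" obtains B where "B \<in> P" "i \<in> B"
  using assms partition_onD1 by blast

lemma part_sub: "partition_on S P \<Longrightarrow> B \<in> P \<Longrightarrow> B \<subseteq> S"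
  using partition_onD1 by blast

lemma part_ne: "partition_on S P \<Longrightarrow> B \<in> P \<Longrightarrow> B \<noteq> {}"
  using partition_onD3 by blast

lemma part_disj: "partition_on S P \<Longrightarrow> B \<in> P \<Longrightarrow> B' \<in> P \<Longrightarrow> i \<in> B \<Longrightarrow> i \<in> B' \<Longrightarrow> B = B'"
  by (auto simp: partition_on_def disjoint_def)

lemma min_lt_max: assumes "finite B" "B \<noteq> {}" "\<not> (\<exists>x. B = {x})" shows "Min B < Max B"
proof -
  have "Min B \<le> Max B" using assms by simp
  moreover have "Min B \<noteq> Max B"
  proof
    assume h: "Min B = Max B"
    have "B = {Min B}"
    proof
      show "B \<subseteq> {Min B}"
      proof
        fix x assume "x \<in> B"
        hence "Min B \<le> x" "x \<le> Max B" using assms by auto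
        thus "x \<in> {Min B}" using h by simp
      qed
    qed (use assms in auto)
    thus False using assms by blast
  qed
  ultimately show ?thesis by simp
qed

lemma key_block:
  assumes nc: "ncns S P" and fin: "finite S" and ne: "S \<noteq> {}"
  shows "{k\<in>S. Max {k\<in>S. k \<le> Min {k\<in>S. tyof P k = TC} \<and> tyof P k = TA} \<le> k
            \<and> k \<le> Min {k\<in>S. tyof P k = TC}} \<in> P"
proof -
  have pa: "partition_on S P" and ncr: "noncrossing P" and ns: "\<And>B. B \<in> P \<Longrightarrow> \<not> (\<exists>x. B = {x})"
    using nc by (auto simp: ncns_def)
  have finB: "\<And>B. B \<in> P \<Longrightarrow> finite B" using part_sub[OF pa] fin finite_subset by blast
  have ltB: "\<And>B. B \<in> P \<Longrightarrow> Min B < Max B"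
    by (rule min_lt_max[OF finB part_ne[OF pa] ns])
  have maxTC: "\<And>B. B \<in> P \<Longrightarrow> tyof P (Max B) = TC"
  proof -
    fix B assume B: "B \<in> P"
    have "Max B \<in> B" using finB[OF B] part_ne[OF pa B] by simp
    thus "tyof P (Max B) = TC" using tyof_in[OF pa B] ltB[OF B] by auto
  qed
  define C where "C = {k\<in>S. tyof P k = TC}"
  have MS: "Max S \<in> S" using fin ne by simp
  obtain B0 where B0: "B0 \<in> P" "Max S \<in> B0" using part_block[OF pa MS] by blast
  have "Max B0 \<le> Max S" by (rule Max_mono[OF part_sub[OF pa B0(1)] part_ne[OF pa B0(1)] fin])
  moreover have "Max S \<le> Max B0" by (rule Max_ge[OF finB[OF B0(1)] B0(2)])
  ultimately have "Max B0 = Max S" by simp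
  hence "Max S \<in> C" using maxTC[OF B0(1)] C_def MS by simp
  hence Cne: "C \<noteq> {}" and Cfin: "finite C" using fin C_def by auto
  define c where "c = Min C"
  have cC: "c \<in> C" using Cne Cfin c_def by simp
  have cmin: "\<And>k. k \<in> C \<Longrightarrow> c \<le> k" using Cfin c_def by simp
  obtain B where B: "B \<in> P" "c \<in> B" using part_block[OF pa] cC C_def by blast
  have cmax: "c = Max B" and cnmin: "c \<noteq> Min B"
    using tyof_in[OF pa B] cC C_def by (auto split: if_splits)
  define m0 where "m0 = Min B"
  have m0B: "m0 \<in> B" using m0_def finB[OF B(1)] part_ne[OF pa B(1)] by simp
  have Bmin: "\<And>k. k \<in> B \<Longrightarrow> m0 \<le> k" using m0_def finB[OF B(1)] by simp
  have Bmax: "\<And>k. k \<in> B \<Longrightarrow> k \<le> c" using cmax finB[OF B(1)] by simp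
  have claim1: "B = {k\<in>S. m0 \<le> k \<and> k \<le> c}"
  proof
    show "B \<subseteq> {k\<in>S. m0 \<le> k \<and> k \<le> c}" using Bmin Bmax part_sub[OF pa B(1)] by auto
  next
    show "{k\<in>S. m0 \<le> k \<and> k \<le> c} \<subseteq> B"
    proof
      fix k assume k: "k \<in> {k\<in>S. m0 \<le> k \<and> k \<le> c}"
      obtain B' where B': "B' \<in> P" "k \<in> B'" using part_block[OF pa] k by blast
      show "k \<in> B"
      proof (rule ccontr)
        assume nk: "k \<notin> B"
        hence BB': "B \<noteq> B'" using B' by blast
        have "k \<noteq> m0" "k \<noteq> c" using nk m0B B by auto
        hence mk: "m0 < k" "k < c" using k by auto
        define M where "M = Max B'"
        have MB': "M \<in> B'" using M_def finB[OF B'(1)] part_ne[OF pa B'(1)] by simp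
        have "M \<in> C" using maxTC[OF B'(1)] MB' part_sub[OF pa B'(1)] C_def M_def by auto
        hence "c \<le> M" by (rule cmin)
        moreover have "M \<noteq> c" using MB' B BB' part_disj[OF pa] B'(1) by blast
        ultimately have "c < M" by simp
        moreover have "k \<le> M" using M_def finB[OF B'(1)] B'(2) by simp
        ultimately show False using ncr BB' mk m0B B(2) B'(2) MB' B(1) B'(1)
          unfolding noncrossing_def by blast
      qed
    qed
  qed
  define A where "A = {k\<in>S. k \<le> c \<and> tyof P k = TA}"
  have "Max A = m0"
  proof (rule Max_eqI)
    show "finite A" using fin A_def by simp
    show "m0 \<in> A" using A_def m0B part_sub[OF pa B(1)] Bmax tyof_in[OF pa B(1) m0B] m0_def by auto
    fix y assume y: "y \<in> A"
    show "y \<le> m0"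
    proof (rule ccontr)
      assume "\<not> y \<le> m0"
      hence "y \<in> B" using claim1 y A_def by auto
      thus False using tyof_in[OF pa B(1)] y A_def m0_def \<open>\<not> y \<le> m0\<close> by (auto split: if_splits)
    qed
  qed
  thus ?thesis using claim1 B(1) unfolding A_def c_def C_def by simp
qed


lemma ncns_remove:
  assumes nc: "ncns S P" and B: "B \<in> P"
  shows "ncns (S - B) (P - {B})"
proof -
  have pa: "partition_on S P" using nc by (simp add: ncns_def)
  have eq: "P = insert B (P - {B})" using B by blast
  have dj: "disjnt B (\<Union>(P - {B}))"
    using part_disj[OF pa] B by (auto simp: disjnt_def)
  have "partition_on S (insert B (P - {B}))" using pa eq by simp
  hence "partition_on (S - B) (P - {B})" using partition_on_insert[OF dj] by blast
  thus ?thesis using nc by (auto simp: ncns_def noncrossing_def)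
qed

lemma tyof_remove:
  assumes nc: "ncns S P" and B: "B \<in> P" and i: "i \<in> S - B"
  shows "tyof (P - {B}) i = tyof P i"
proof -
  have pa: "partition_on S P" using nc by (simp add: ncns_def)
  have pa': "partition_on (S - B) (P - {B})" using ncns_remove[OF nc B] by (simp add: ncns_def)
  obtain B' where B': "B' \<in> P - {B}" "i \<in> B'" using part_block[OF pa' i] by blast
  show ?thesis using tyof_in[OF pa' B'] tyof_in[OF pa _ B'(2)] B'(1) by simp
qed

lemma uniq:
  "finite S \<Longrightarrow> ncns S P \<Longrightarrow> ncns S Q \<Longrightarrow> (\<forall>i\<in>S. tyof P i = tyof Q i) \<Longrightarrow> P = Q"
proof (induction "card S" arbitrary: S P Q rule: less_induct)
  case less
  show ?case
  proof (cases "S = {}")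
    case True
    thus ?thesis using less.prems by (simp add: ncns_def partition_on_empty)
  next
    case False
    define c where "c = Min {k\<in>S. tyof P k = TC}"
    define m where "m = Max {k\<in>S. k \<le> c \<and> tyof P k = TA}"
    define B where "B = {k\<in>S. m \<le> k \<and> k \<le> c}"
    have BP: "B \<in> P" using key_block[OF less.prems(2,1) False] unfolding B_def m_def c_def .
    have e1: "{k\<in>S. tyof Q k = TC} = {k\<in>S. tyof P k = TC}" using less.prems(4) by auto
    have e2: "{k\<in>S. k \<le> c \<and> tyof Q k = TA} = {k\<in>S. k \<le> c \<and> tyof P k = TA}"
      using less.prems(4) by auto
    have BQ: "B \<in> Q" using key_block[OF less.prems(3,1) False] unfolding e1 c_def[symmetric] e2 m_def[symmetric] B_def[symmetric] .
    have pa: "partition_on S P" using less.prems by (simp add: ncns_def)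
    have "B \<noteq> {}" "B \<subseteq> S" using part_ne[OF pa BP] part_sub[OF pa BP] by auto
    hence lt: "card (S - B) < card S" using less.prems(1)
      by (metis Diff_subset card_seteq finite_Diff double_diff dual_order.refl not_less_iff_gr_or_eq psubset_card_mono Diff_empty Diff_eq_empty_iff psubsetI card_mono)
    have "P - {B} = Q - {B}"
      using less.hyps[OF lt _ ncns_remove[OF less.prems(2) BP] ncns_remove[OF less.prems(3) BQ]]
        less.prems(1,4) tyof_remove[OF less.prems(2) BP] tyof_remove[OF less.prems(3) BQ] by simp
    thus ?thesis using BP BQ by blast
  qed
qed


fun stp :: "ty \<Rightarrow> nat option \<Rightarrow> nat option" where
  "stp t None = None"
| "stp TC (Some h) = Some (Suc h)"
| "stp TA (Some h) = (if h = 0 then None else Some (h - 1))"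
| "stp TP (Some h) = (if h = 0 then None else Some h)"

lemma foldr_None: "foldr stp xs None = None"
  by (induction xs) auto

lemma foldr_TPs: "set xs \<subseteq> {TP} \<Longrightarrow> foldr stp xs (Some (Suc h)) = Some (Suc h)"
  by (induction xs) auto

lemma noTC: "TC \<notin> set ts \<Longrightarrow> foldr stp ts (Some 0) = (if ts = [] then Some 0 else None)"
proof (induction ts)
  case (Cons t ts)
  thus ?case by (cases t) (auto simp: foldr_None)
qed simp

lemma pow_None: "(stp TP ^^ r) None = None"
  by (induction r) auto

lemma pow_Some: "(stp TP ^^ r) (Some (Suc h)) = Some (Suc h)"
  by (induction r) auto

lemma remove_factor:
  "foldr stp (TA # replicate r TP @ TC # zs) s = foldr stp zs s"
proof (cases "foldr stp zs s")
  case None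
  thus ?thesis by (simp add: foldr_None pow_None)
next
  case (Some h)
  thus ?thesis using Some by (simp add: pow_Some)

qed

lemma remove_factor2:
  "foldr stp (xs @ TA # replicate r TP @ TC # zs) s = foldr stp (xs @ zs) s"
  by (simp add: remove_factor del: foldr.simps)

lemma decomp:
  assumes v: "foldr stp ts (Some 0) = Some 0" and ne: "ts \<noteq> []"
  shows "\<exists>xs r zs. ts = xs @ TA # replicate r TP @ TC # zs"
proof -
  have "TC \<in> set ts" using noTC[of ts] v ne by auto
  then obtain xs zs where ts: "ts = xs @ TC # zs" and nx: "TC \<notin> set xs" using split_list_first by metis
  have "TA \<in> set xs"
  proof (rule ccontr)
    assume "TA \<notin> set xs"
    hence sx: "set xs \<subseteq> {TP}" using nx by (metis insertI1 subsetI ty.exhaust)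
    show False
    proof (cases "foldr stp zs (Some 0)")
      case None
      thus False using v ts by (simp add: foldr_None)
    next
      case (Some h)
      thus False using v ts foldr_TPs[OF sx, of h] by simp
    qed
  qed
  then obtain as bs where xs: "xs = as @ TA # bs" and nb: "TA \<notin> set bs" using split_list_last by metis
  have "\<forall>y\<in>set bs. y = TP" using nb nx xs by (metis Un_iff insert_iff list.set(2) set_append ty.exhaust)
  hence "bs = replicate (length bs) TP" using replicate_length_same by metis
  hence "ts = as @ TA # replicate (length bs) TP @ TC # zs" using ts xs by simp
  thus ?thesis by blast
qed


lemma split_len:
  assumes "length ps = length xs + Suc (Suc (r + length zs))"
  shows "\<exists>p1 a p2 b p3. ps = p1 @ a # p2 @ b # p3 \<and> length p1 = length xs \<and> length p2 = r
           \<and> length p3 = length zs"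
proof -
  obtain a D where D: "drop (length xs) ps = a # D"
    by (cases "drop (length xs) ps") (use assms in auto)
  have lD: "length D = Suc (r + length zs)" using D assms
    by (metis diff_add_inverse length_Cons length_drop nat.inject)
  obtain b p3 where E: "drop r D = b # p3"
    by (cases "drop r D") (use lD in auto)
  have l3: "length p3 = length zs" using E lD
    by (metis add_Suc_right diff_add_inverse length_Cons length_drop nat.inject)
  have "ps = take (length xs) ps @ a # take r D @ b # p3"
    using D E by (metis append_take_drop_id)
  moreover have "length (take (length xs) ps) = length xs" using assms by simp
  moreover have "length (take r D) = r" using lD by simp
  ultimately show ?thesis using l3 by blast
qed

lemma Min_sorted: assumes "a \<in> B" "finite B" "\<And>y. y \<in> B \<Longrightarrow> a \<le> y" shows "Min B = a"
  using assms by (intro Min_eqI) auto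

lemma Max_sorted: assumes "a \<in> B" "finite B" "\<And>y. y \<in> B \<Longrightarrow> y \<le> a" shows "Max B = a"
  using assms by (intro Max_eqI) auto

lemma exist:
  "foldr stp ts (Some 0) = Some 0 \<Longrightarrow> sorted_wrt (<) ps \<Longrightarrow> length ps = length ts
    \<Longrightarrow> \<exists>P. ncns (set ps) P \<and> map (tyof P) ps = ts"
proof (induction "length ts" arbitrary: ts ps rule: less_induct)
  case less
  show ?case
  proof (cases "ts = []")
    case True
    thus ?thesis using less.prems
      by (intro exI[of _ "{}"]) (simp add: ncns_def partition_on_empty noncrossing_def)
  next
    case False
    obtain xs r zs where ts: "ts = xs @ TA # replicate r TP @ TC # zs"
      using decomp[OF less.prems(1) False] by blast
    obtain pxs a mids z pzs where ps: "ps = pxs @ a # mids @ z # pzs"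
      and l1: "length pxs = length xs" and l2: "length mids = r" and l3: "length pzs = length zs"
      using split_len[of ps xs r zs] less.prems(3) ts by auto
    define ps' where "ps' = pxs @ pzs"
    define ts' where "ts' = xs @ zs"
    have so: "sorted_wrt (<) ps" by (rule less.prems(2))
    have sA: "sorted_wrt (<) pxs \<and> sorted_wrt (<) (a # mids @ z # pzs)
        \<and> (\<forall>x\<in>set pxs. \<forall>y\<in>set (a # mids @ z # pzs). x < y)"
      using so unfolding ps by (rule iffD1[OF sorted_wrt_append])
    have o1: "\<And>x y. x \<in> set pxs \<Longrightarrow> y \<in> set (a # mids @ z # pzs) \<Longrightarrow> x < y"
      using sA by blast
    have so2: "sorted_wrt (<) (a # mids @ z # pzs)" using sA by blast
    have o2a: "\<forall>y\<in>set (mids @ z # pzs). a < y" using so2 unfolding sorted_wrt.simps by blast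
    have o2: "\<And>y. y \<in> set (mids @ z # pzs) \<Longrightarrow> a < y" using o2a by blast
    have so3: "sorted_wrt (<) (mids @ z # pzs)" using so2 unfolding sorted_wrt.simps by blast
    have sB: "sorted_wrt (<) mids \<and> sorted_wrt (<) (z # pzs)
        \<and> (\<forall>x\<in>set mids. \<forall>y\<in>set (z # pzs). x < y)"
      using so3 by (rule iffD1[OF sorted_wrt_append])
    have o3: "\<And>x y. x \<in> set mids \<Longrightarrow> y \<in> set (z # pzs) \<Longrightarrow> x < y"
      using sB by blast
    have o4a: "\<forall>y\<in>set pzs. z < y" using sB unfolding sorted_wrt.simps by blast
    have o4: "\<And>y. y \<in> set pzs \<Longrightarrow> z < y" using o4a by blast
    have so': "sorted_wrt (<) ps'"
    proof -
      have "sorted_wrt (<) pxs" using sA by blast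
      moreover have "sorted_wrt (<) pzs" using sB unfolding sorted_wrt.simps by blast
      ultimately show ?thesis unfolding ps'_def sorted_wrt_append using o1 by auto
    qed
    have v': "foldr stp ts' (Some 0) = Some 0" using less.prems(1) unfolding ts ts'_def remove_factor2 .
    have lt: "length ts' < length ts" using ts ts'_def by simp
    obtain P' where P': "ncns (set ps') P'" and mP': "map (tyof P') ps' = ts'"
      using less.hyps[OF lt v' so'] ps'_def ts'_def l1 l3 by auto
    define B where "B = set (a # mids @ [z])"
    define P where "P = insert B P'"
    have pa': "partition_on (set ps') P'" using P' by (simp add: ncns_def)
    have Bge: "\<And>y. y \<in> B \<Longrightarrow> a \<le> y"
    proof -
      fix y assume "y \<in> B"
      hence "y = a \<or> y \<in> set (mids @ z # pzs)" using B_def by auto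
      thus "a \<le> y" using o2 by fastforce
    qed
    have Ble: "\<And>y. y \<in> B \<Longrightarrow> y \<le> z"
    proof -
      fix y assume "y \<in> B"
      hence "y = a \<or> y = z \<or> y \<in> set mids" using B_def by auto
      moreover have "a < z" using o2 by simp
      ultimately show "y \<le> z" using o3 by fastforce
    qed
    have between: "\<And>x y w. x \<in> set ps' \<Longrightarrow> y \<in> B \<Longrightarrow> w \<in> B \<Longrightarrow> y < x \<Longrightarrow> x < w \<Longrightarrow> False"
    proof -
      fix x y w assume x: "x \<in> set ps'" and y: "y \<in> B" and w: "w \<in> B" and yx: "y < x" and xw: "x < w"
      show False
      proof (cases "x \<in> set pxs")
        case True
        hence "x < a" using o1 by simp
        thus False using Bge[OF y] yx by simp
      next
        case False
        hence "x \<in> set pzs" using x ps'_def by simp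
        hence "z < x" using o4 by simp
        thus False using Ble[OF w] xw by simp
      qed
    qed
    have Bdisj: "B \<inter> set ps' = {}"
    proof (rule ccontr)
      assume "B \<inter> set ps' \<noteq> {}"
      then obtain x where x: "x \<in> B" "x \<in> set ps'" by blast
      show False
      proof (cases "x \<in> set pxs")
        case True
        hence "x < a" using o1 by simp
        thus False using Bge[OF x(1)] by simp
      next
        case False
        hence "x \<in> set pzs" using x ps'_def by simp
        hence "z < x" using o4 by simp
        thus False using Ble[OF x(1)] by simp
      qed
    qed
    have sps: "set ps = set ps' \<union> B" using ps ps'_def B_def by auto
    have BnP': "B \<notin> P'"
    proof
      assume "B \<in> P'"
      hence "B \<subseteq> set ps'" using part_sub[OF pa'] by blast
      thus False using Bdisj B_def by auto
    qed
    have dj: "disjnt B (\<Union>P')" using Bdisj partition_onD1[OF pa'] by (auto simp: disjnt_def)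
    have pa: "partition_on (set ps) P"
    proof -
      have "set ps - B = set ps'" using sps Bdisj by auto
      moreover have "B \<subseteq> set ps" using sps by auto
      moreover have "B \<noteq> {}" using B_def by simp
      ultimately show ?thesis unfolding P_def partition_on_insert[OF dj] using pa' by simp
    qed
    have az: "a < z" by (rule o2) simp
    have ncr: "noncrossing P"
      unfolding noncrossing_def
    proof (intro ballI allI impI)
      fix B1 B2 p q r' d
      assume B1: "B1 \<in> P" and B2: "B2 \<in> P" and h: "B1 \<noteq> B2 \<and> p < q \<and> q < r' \<and> r' < d \<and> p \<in> B1 \<and> r' \<in> B1 \<and> q \<in> B2 \<and> d \<in> B2"
      show False
      proof (cases "B1 = B")
        case True
        hence "B2 \<in> P'" using B2 h P_def by auto
        hence "q \<in> set ps'" using part_sub[OF pa'] h by blast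
        thus False using between[of q p r'] h True by simp
      next
        case n1: False
        hence B1': "B1 \<in> P'" using B1 P_def by auto
        show False
        proof (cases "B2 = B")
          case True
          have "r' \<in> set ps'" using part_sub[OF pa' B1'] h by blast
          thus False using between[of r' q d] h True by simp
        next
          case False
          hence "B2 \<in> P'" using B2 P_def by auto
          moreover have "noncrossing P'" using P' by (simp add: ncns_def)
          ultimately show False using B1' h unfolding noncrossing_def by blast
        qed
      qed
    qed
    have nsB: "\<not> (\<exists>x. B = {x})" using az B_def by auto
    have nc: "ncns (set ps) P" using pa ncr nsB P' unfolding ncns_def P_def by auto
    have finB: "finite B" using B_def by simp
    have BP: "B \<in> P" using P_def by simp
    have minB: "Min B = a" using Min_sorted[OF _ finB Bge] B_def by simp
    have maxB: "Max B = z" using Max_sorted[OF _ finB Ble] B_def by simp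
    have tyP': "\<And>x. x \<in> set ps' \<Longrightarrow> tyof P x = tyof P' x"
    proof -
      fix x assume x: "x \<in> set ps'"
      obtain B' where B': "B' \<in> P'" "x \<in> B'" using part_block[OF pa' x] by blast
      have "B' \<in> P" using B' P_def by simp
      thus "tyof P x = tyof P' x" using tyof_in[OF pa' B'] tyof_in[OF pa _ B'(2)] by simp
    qed
    have m1: "map (tyof P) pxs = xs"
    proof -
      have h1: "map (tyof P) pxs = map (tyof P') pxs" using tyP' ps'_def by simp
      have h2: "map (tyof P') pxs = xs" using mP' l1 ps'_def ts'_def by simp
      show ?thesis using h1 h2 by (rule trans)
    qed
    have m3: "map (tyof P) pzs = zs"
    proof -
      have h1: "map (tyof P) pzs = map (tyof P') pzs" using tyP' ps'_def by simp
      have h2: "map (tyof P') pzs = zs" using mP' l1 ps'_def ts'_def by simp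
      show ?thesis using h1 h2 by (rule trans)
    qed
    have ta: "tyof P a = TA" using tyof_in[OF pa BP, of a] minB B_def by simp
    have tz: "tyof P z = TC" using tyof_in[OF pa BP, of z] minB maxB B_def az by simp
    have tm: "map (tyof P) mids = replicate r TP"
    proof -
      have "\<And>y. y \<in> set mids \<Longrightarrow> tyof P y = TP"
      proof -
        fix y assume y: "y \<in> set mids"
        have "a < y" "y < z" using o2 o3 y by auto
        thus "tyof P y = TP" using tyof_in[OF pa BP, of y] minB maxB B_def y by simp
      qed
      hence "map (tyof P) mids = map (\<lambda>_. TP) mids" by simp
      thus ?thesis using l2 map_replicate_const by metis
    qed
    have "map (tyof P) ps = ts" using m1 m3 ta tz tm ps ts by simp
    thus ?thesis using nc by blast
  qed
qed



lemma UNIV_ty: "(UNIV::ty set) = {TC,TA,TP}" using ty.exhaust by auto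

instance ty :: finite by standard (simp add: UNIV_ty)

definition coef :: "'b fvec \<Rightarrow> complex" where
  "coef v = (\<Sum>p\<leftarrow>v. if snd p = [] then fst p else 0)"

lemma coef_append: "coef (x @ y) = coef x + coef y" by (simp add: coef_def)

lemma wi_nil: "word_inner sc st phi gam w [] = (if w = [] then 1 else 0)"
  by (cases w) auto

lemma fock_vac: "fock_inner sc st phi gam v vac = coef v"
  by (induction v) (auto simp: fock_inner_def vac_def coef_def wi_nil)

definition Aop :: "(complex \<Rightarrow> 'b::ring_1 \<Rightarrow> 'b) \<Rightarrow> ('b \<Rightarrow> 'b) \<Rightarrow> ('b \<Rightarrow> complex) \<Rightarrow> ('b \<Rightarrow> 'b)
    \<Rightarrow> ('b \<Rightarrow> 'b \<Rightarrow> 'b) \<Rightarrow> ty \<Rightarrow> 'b \<Rightarrow> 'b fvec \<Rightarrow> 'b fvec" where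
  "Aop sc st phi gam Lam t b = (case t of TC \<Rightarrow> cre b | TA \<Rightarrow> ann sc st phi gam b | TP \<Rightarrow> pres Lam b)"

lemma Aop_append: "Aop sc st phi gam Lam t b (x @ y) = Aop sc st phi gam Lam t b x @ Aop sc st phi gam Lam t b y"
  by (cases t) (simp_all add: Aop_def cre_def ann_def pres_def lin_ext_def)

lemma Aop_Nil: "Aop sc st phi gam Lam t b [] = []"
  by (cases t) (simp_all add: Aop_def cre_def ann_def pres_def lin_ext_def)

lemma Xop_Aop: "Xop sc st phi gam Lam b v = Aop sc st phi gam Lam TC b v @ Aop sc st phi gam Lam TA b v
   @ Aop sc st phi gam Lam TP b v"
  by (simp add: Xop_def Aop_def)

lemma sum_lists_Suc:
  "(\<Sum>ts\<in>{ts::ty list. length ts = Suc m}. g ts) = (\<Sum>t\<in>UNIV. \<Sum>ts\<in>{ts. length ts = m}. g (t # ts))"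
proof -
  have e: "{ts::ty list. length ts = Suc m} = (\<lambda>(t,ts). t # ts) ` (UNIV \<times> {ts. length ts = m})"
  proof
    show "{ts::ty list. length ts = Suc m} \<subseteq> (\<lambda>(t,ts). t # ts) ` (UNIV \<times> {ts. length ts = m})"
    proof
      fix ts :: "ty list" assume "ts \<in> {ts. length ts = Suc m}"
      then obtain t ts' where "ts = t # ts'" "length ts' = m" by (cases ts) auto
      thus "ts \<in> (\<lambda>(t,ts). t # ts) ` (UNIV \<times> {ts. length ts = m})" by force
    qed
  qed auto
  have i: "inj_on (\<lambda>(t,ts). t # ts) (UNIV \<times> {ts::ty list. length ts = m})"
    by (auto simp: inj_on_def)
  show ?thesis unfolding e sum.reindex[OF i] sum.cartesian_product by (simp add: case_prod_beta')
qed

lemma sum_UNIV_ty: "(\<Sum>t\<in>UNIV. h t) = h TC + h TA + h TP"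
  by (simp add: UNIV_ty add.assoc)

lemma op_prod_Cons: "op_prod (A # ops) v = A (op_prod ops v)"
  by (simp add: op_prod_def)

lemma op_prod_Nil: "op_prod [] v = v"
  by (simp add: op_prod_def)

lemma expand:
  assumes "\<And>x y. F (x @ y) = F x + F y"
  shows "F (op_prod (map (\<lambda>i. Xop sc st phi gam Lam (u i)) is) v) =
    (\<Sum>ts\<in>{ts. length ts = length is}. F (op_prod (map (\<lambda>(t,i). Aop sc st phi gam Lam t (u i)) (zip ts is)) v))"
  using assms
proof (induction "is" arbitrary: F)
  case Nil
  have "{ts::ty list. length ts = 0} = {[]}" by auto
  thus ?case by (simp add: op_prod_Nil)
next
  case (Cons i "is")
  define w where "w = op_prod (map (\<lambda>i. Xop sc st phi gam Lam (u i)) is) v"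
  have IH: "\<And>t. F (Aop sc st phi gam Lam t (u i) w) =
     (\<Sum>ts\<in>{ts. length ts = length is}. F (Aop sc st phi gam Lam t (u i)
        (op_prod (map (\<lambda>(t,i). Aop sc st phi gam Lam t (u i)) (zip ts is)) v)))"
    unfolding w_def by (rule Cons.IH) (simp add: Aop_append Cons.prems)
  have "F (op_prod (map (\<lambda>i. Xop sc st phi gam Lam (u i)) (i # is)) v)
     = F (Aop sc st phi gam Lam TC (u i) w) + F (Aop sc st phi gam Lam TA (u i) w) + F (Aop sc st phi gam Lam TP (u i) w)"
    by (simp add: op_prod_Cons w_def Xop_Aop Cons.prems add.assoc)
  also have "\<dots> = (\<Sum>t\<in>UNIV. \<Sum>ts\<in>{ts. length ts = length is}. F (Aop sc st phi gam Lam t (u i)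
        (op_prod (map (\<lambda>(t,i). Aop sc st phi gam Lam t (u i)) (zip ts is)) v)))"
    unfolding sum_UNIV_ty IH ..
  also have "\<dots> = (\<Sum>ts\<in>{ts. length ts = length (i # is)}. F (op_prod (map (\<lambda>(t,i). Aop sc st phi gam Lam t (u i)) (zip ts (i # is))) v))"
    unfolding length_Cons sum_lists_Suc by (simp add: op_prod_Cons)
  finally show ?case .
qed

lemma shape:
  "length ts = length is \<Longrightarrow>
   op_prod (map (\<lambda>(t,i). Aop sc st phi gam Lam t (u i)) (zip ts is)) vac = [] \<or>
   (\<exists>c w. op_prod (map (\<lambda>(t,i). Aop sc st phi gam Lam t (u i)) (zip ts is)) vac = [(c,w)]
     \<and> foldr stp ts (Some 0) = Some (length w))"
proof (induction ts "is" rule: list_induct2)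
  case Nil
  thus ?case by (simp add: op_prod_Nil vac_def)
next
  case (Cons t ts i "is")
  define R where "R = op_prod (map (\<lambda>(t,i). Aop sc st phi gam Lam t (u i)) (zip ts is)) vac"
  have e: "op_prod (map (\<lambda>(t,i). Aop sc st phi gam Lam t (u i)) (zip (t # ts) (i # is))) vac
      = Aop sc st phi gam Lam t (u i) R" by (simp add: op_prod_Cons R_def)
  show ?case unfolding e
  proof (cases "R = []")
    case True
    thus "Aop sc st phi gam Lam t (u i) R = [] \<or> (\<exists>c w. Aop sc st phi gam Lam t (u i) R = [(c, w)] \<and>
          foldr stp (t # ts) (Some 0) = Some (length w))" by (simp add: Aop_Nil)
  next
    case False
    then obtain c w where R: "R = [(c,w)]" and h: "foldr stp ts (Some 0) = Some (length w)"
      using Cons.IH R_def by blast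
    show "Aop sc st phi gam Lam t (u i) R = [] \<or> (\<exists>c w. Aop sc st phi gam Lam t (u i) R = [(c, w)] \<and>
          foldr stp (t # ts) (Some 0) = Some (length w))"
    proof (cases t)
      case TC
      thus ?thesis using R h by (simp add: Aop_def cre_def lin_ext_def)
    next
      case TA
      show ?thesis
      proof (cases w)
        case Nil thus ?thesis using R h TA by (simp add: Aop_def ann_def lin_ext_def)
      next
        case (Cons x ws)
        show ?thesis
        proof (cases ws)
          case Nil thus ?thesis using R h TA Cons by (simp add: Aop_def ann_def lin_ext_def)
        next
          case (Cons y ws') thus ?thesis using R h TA \<open>w = x # ws\<close> by (simp add: Aop_def ann_def lin_ext_def)
        qed
      qed
    next
      case TP
      thus ?thesis using R h by (cases w) (simp_all add: Aop_def pres_def lin_ext_def)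
    qed
  qed
qed

lemma val_nz:
  assumes "length ts = length is"
    and "coef (op_prod (map (\<lambda>(t,i). Aop sc st phi gam Lam t (u i)) (zip ts is)) vac) \<noteq> 0"
  shows "foldr stp ts (Some 0) = Some 0"
  using shape[OF assms(1), of sc st phi gam Lam u] assms(2)
  by (auto simp: coef_def split: if_splits)

lemma zip_map_self: "map (\<lambda>(t,i). h t i) (zip (map f xs) xs) = map (\<lambda>i. h (f i) i) xs"
  by (induction xs) auto

lemma WM_op_Aop: "WM_op sc st phi gam Lam P i b = Aop sc st phi gam Lam (tyof P i) b"
  by (simp add: WM_op_def tyof_def Aop_def)



theorem proposition3p2:
  fixes sc :: "complex \<Rightarrow> 'b::ring_1 \<Rightarrow> 'b"
    and st :: "'b \<Rightarrow> 'b"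
    and phi :: "'b \<Rightarrow> complex"
    and gam :: "'b \<Rightarrow> 'b"
    and Lam :: "'b \<Rightarrow> 'b \<Rightarrow> 'b"
  assumes alg: "star_alg sc st"
    and phi_lin: "star_linear_functional sc st phi"
    and gam_lin: "star_linear_map sc st gam"
    and Lam_lin: "star_bilinear_map sc st Lam"
    and phi_pos: "positive_functional st phi"
    and phi_faithful: "faithful_functional st phi"
    and cp: "completely_positive st (gp sc phi gam)"
    and phi_adj: "\<And>b u v. phi (st v * Lam b u) = phi (st (Lam (st b) v) * u)"
    and gam_adj: "\<And>b u v. gam (st v * Lam b u) = gam (st (Lam (st b) v) * u)"
  shows "(\<forall>n \<ge> 2. \<forall>u :: nat \<Rightarrow> 'b.
            fock_inner sc st phi gam
              (op_prod (map (\<lambda>i. Xop sc st phi gam Lam (u i)) [1..<Suc n]) vac) vac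
          = (\<Sum>P\<in>NC_ns n. fock_inner sc st phi gam (WM sc st phi gam Lam n P u vac) vac))
      \<and> (\<forall>u1 :: 'b. fock_inner sc st phi gam (Xop sc st phi gam Lam u1 vac) vac = 0)"
proof (intro conjI allI impI)
  fix u1 :: 'b
  show "fock_inner sc st phi gam (Xop sc st phi gam Lam u1 vac) vac = 0"
    unfolding fock_vac by (simp add: Xop_def cre_def ann_def pres_def lin_ext_def vac_def coef_def)
next
  fix n :: nat and u :: "nat \<Rightarrow> 'b"
  define V where "V ts = coef (op_prod (map (\<lambda>(t,i). Aop sc st phi gam Lam t (u i)) (zip ts [1..<Suc n])) vac)" for ts
  define g where "g P = map (tyof P) [1..<Suc n]" for P
  define T where "T = {ts::ty list. length ts = n}"
  have lhs: "fock_inner sc st phi gam (op_prod (map (\<lambda>i. Xop sc st phi gam Lam (u i)) [1..<Suc n]) vac) vac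
      = (\<Sum>ts\<in>T. V ts)"
  proof -
    have "coef (op_prod (map (\<lambda>i. Xop sc st phi gam Lam (u i)) [1..<Suc n]) vac) =
      (\<Sum>ts\<in>{ts. length ts = length [1..<Suc n]}. coef (op_prod (map (\<lambda>(t,i). Aop sc st phi gam Lam t (u i)) (zip ts [1..<Suc n])) vac))"
      by (rule expand) (rule coef_append)
    thus ?thesis unfolding fock_vac V_def T_def length_upt by simp
  qed
  have rhs1: "fock_inner sc st phi gam (WM sc st phi gam Lam n P u vac) vac = V (g P)" for P
    unfolding fock_vac V_def g_def WM_def WM_op_Aop zip_map_self[of "\<lambda>t i. Aop sc st phi gam Lam t (u i)"]
    by simp
  have inj: "inj_on g (NC_ns n)"
  proof (rule inj_onI)
    fix P Q assume P: "P \<in> NC_ns n" and Q: "Q \<in> NC_ns n" and e: "g P = g Q"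
    have "\<forall>i\<in>{1..n}. tyof P i = tyof Q i" 
    proof
      fix i assume i: "i \<in> {1..n}"
      hence "i \<in> set [1..<Suc n]" by auto
      thus "tyof P i = tyof Q i" using e unfolding g_def map_eq_conv by blast
    qed
    thus "P = Q" using uniq[of "{1..n}" P Q] P Q by (simp add: NC_ns_iff)
  qed
  have sub: "g ` NC_ns n \<subseteq> T" unfolding g_def T_def by auto
  have finT: "finite T" unfolding T_def using finite_lists_length_eq[of "UNIV::ty set" n] by simp
  have zero: "\<forall>ts\<in>T - g ` NC_ns n. V ts = 0"
  proof
    fix ts assume ts: "ts \<in> T - g ` NC_ns n"
    show "V ts = 0"
    proof (rule ccontr)
      assume "V ts \<noteq> 0"
      moreover have lts: "length ts = length [1..<Suc n]" using ts unfolding T_def by simp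
      ultimately have h: "foldr stp ts (Some 0) = Some 0"
        unfolding V_def by (rule val_nz[rotated])
      obtain P where "ncns (set [1..<Suc n]) P" "map (tyof P) [1..<Suc n] = ts"
        using exist[OF h sorted_wrt_upt[of 1 "Suc n"] lts[symmetric]] by blast
      moreover have "set [1..<Suc n] = {1..n}" by (simp only: set_upt atLeastLessThanSuc_atLeastAtMost)
      ultimately have "P \<in> NC_ns n" "g P = ts" unfolding g_def NC_ns_iff by simp_all
      thus False using ts by blast
    qed
  qed
  have "(\<Sum>P\<in>NC_ns n. fock_inner sc st phi gam (WM sc st phi gam Lam n P u vac) vac) = (\<Sum>P\<in>NC_ns n. V (g P))"
    using rhs1 by simp
  also have "\<dots> = (\<Sum>ts\<in>g ` NC_ns n. V ts)" using sum.reindex[OF inj, of V] by simp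
  also have "\<dots> = (\<Sum>ts\<in>T. V ts)" by (rule sum.mono_neutral_left[OF finT sub zero])
  finally show "fock_inner sc st phi gam (op_prod (map (\<lambda>i. Xop sc st phi gam Lam (u i)) [1..<Suc n]) vac) vac
      = (\<Sum>P\<in>NC_ns n. fock_inner sc st phi gam (WM sc st phi gam Lam n P u vac) vac)"
    using lhs by simp
qed

end
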